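(* If $f(z)=z+\sum_{n=2}^\infty a_nz^n\in\mathcal{S}^*_{nc}$, then $$|H_2(2)(f)|=|a_2a_4-a_3^2|\le\tfrac14.$$ The bound is sharp.
   Context: $\mathbb{D}$ is the open unit disk. $\mathcal{A}$ is the class of analytic $f$ on $\mathbb{D}$ with $f(0)=0$, $f'(0)=1$. For analytic $f,g$ on $\mathbb{D}$, $f\prec g$ means $f=g\circ\omega$ for some analytic $\omega:\mathbb{D}\to\mathbb{D}$ with $\omega(0)=0$. $\mathcal{S}^*_{nc}=\{f\in\mathcal{A}: zf'(z)/f(z)\prec (1+z)/\cos z\}$. *)

theory Defs
  imports "HOL-Complex_Analysis.Complex_Analysis"
begin

definition subordinate :: "(complex \<Rightarrow> complex) \<Rightarrow> (complex \<Rightarrow> complex) \<Rightarrow> bool" where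
  "subordinate f g \<longleftrightarrow>
     (\<exists>w. w holomorphic_on ball 0 1 \<and> w 0 = 0 \<and> w ` ball 0 1 \<subseteq> ball 0 1 \<and>
          (\<forall>z\<in>ball 0 1. f z = g (w z)))"

definition classA :: "(complex \<Rightarrow> complex) \<Rightarrow> bool" where
  "classA f \<longleftrightarrow> f holomorphic_on ball 0 1 \<and> f 0 = 0 \<and> deriv f 0 = 1"

text \<open>z f'(z)/f(z), with its removable singularity at 0 filled in by the value f'(0) = 1.\<close>
definition starlike_quot :: "(complex \<Rightarrow> complex) \<Rightarrow> complex \<Rightarrow> complex" where
  "starlike_quot f z = (if z = 0 then 1 else z * deriv f z / f z)"

definition Snc :: "(complex \<Rightarrow> complex) \<Rightarrow> bool" where
  "Snc f \<longleftrightarrow> classA f \<and> (\<forall>z\<in>ball 0 1 - {0}. f z \<noteq> 0) \<and>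
     subordinate (starlike_quot f) (\<lambda>z. (1 + z) / cos z)"

definition coeff :: "(complex \<Rightarrow> complex) \<Rightarrow> nat \<Rightarrow> complex" where
  "coeff f n = (deriv ^^ n) f 0 / fact n"

end

theory Submission
  imports Defs
begin

lemma fps_alg:
  fixes A W :: "complex fps"
  assumes E: "(fps_cos 1 oo W) * (fps_X * fps_deriv A) = A * (1 + W)"
    and A0: "A$0 = 0" and A1: "A$1 = 1" and W0: "W$0 = 0"
  shows "A$2 = W$1" "A$3 = W$2/2 + 3/4*(W$1)^2"
        "A$4 = W$3/3 + 5/6*W$1*W$2 + 7/12*(W$1)^3"
proof -
  have c2: "fps_cos 1 $ 2 = (-1/2::complex)"
    using fps_cos_nth_add_2[of "1::complex" 0] by (simp add: numeral_2_eq_2)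
  have c3: "fps_cos 1 $ 3 = (0::complex)"
    using fps_cos_nth_add_2[of "1::complex" 1] by (simp add: numeral_3_eq_3)
  have P: "(W^i)$n = 0" if "n < i" for i n
    using that W0 proof (induction i arbitrary: n)
    case 0 then show ?case by (simp add: numeral_2_eq_2)
  next
    case (Suc i)
    show ?case unfolding power_Suc fps_mult_nth
    proof (rule sum.neutral, safe)
      fix x assume x: "x \<in> {0..n}"
      show "W $ x * W ^ i $ (n - x) = 0"
      proof (cases "x = 0")
        case True then show ?thesis using Suc.prems by simp
      next
        case False then show ?thesis using Suc.prems x by (simp add: Suc.IH)
      qed
    qed
  qed
  have e: "((fps_cos 1 oo W) * (fps_X * fps_deriv A)) $ n = (A * (1 + W)) $ n" for n
    using E by (simp add: numeral_2_eq_2)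
  note e2 = e[of 2] and e3 = e[of 3] and e4 = e[of 4]
  show a2: "A$2 = W$1" using e2 A0 A1 W0 P
    by (simp add: fps_mult_nth fps_compose_nth eval_nat_numeral)
  have h3: "2 * A$3 - W$1 * W$1 / 2 = W$2 + A$2 * W$1" using e3 A0 A1 W0 P c2
    by (simp add: fps_mult_nth fps_compose_nth eval_nat_numeral)
  show a3: "A$3 = W$2/2 + 3/4*(W$1)^2" using h3 unfolding a2 by (simp add: field_simps power2_eq_square)
  have h4: "3 * A$4 - W$1 * (W$1 * A$2) - W$1 * W$2 = W$3 + A$2 * W$2 + A$3 * W$1" using e4 A0 A1 W0 P c2 c3
    by (simp add: fps_mult_nth fps_compose_nth eval_nat_numeral algebra_simps)
  show "A$4 = W$3/3 + 5/6*W$1*W$2 + 7/12*(W$1)^3" using h4 unfolding a2 a3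
    by (simp add: field_simps power2_eq_square power3_eq_cube)
qed

lemma fps_unique:
  fixes g :: "complex \<Rightarrow> complex"
  assumes "g has_fps_expansion F" "g has_fps_expansion G" shows "F = G"
  using fps_nth_fps_expansion[OF assms(1)] fps_nth_fps_expansion[OF assms(2)]
  by (simp add: fps_eq_iff)

lemma coeff_rel_w:
  assumes fh: "f holomorphic_on ball 0 1" and f0: "f 0 = 0" and f1: "deriv f 0 = 1"
    and fnz: "\<And>z. z \<in> ball 0 1 - {0} \<Longrightarrow> f z \<noteq> 0"
    and wh: "w holomorphic_on ball 0 1" and w0: "w 0 = 0"
    and wb: "w ` ball 0 1 \<subseteq> ball 0 1"
    and wq: "\<And>z. z \<in> ball 0 1 \<Longrightarrow> starlike_quot f z = (1 + w z) / cos (w z)"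
  shows "coeff f 2 = coeff w 1" "coeff f 3 = coeff w 2/2 + 3/4*(coeff w 1)^2"
    "coeff f 4 = coeff w 3/3 + 5/6*coeff w 1*coeff w 2 + 7/12*(coeff w 1)^3"
proof -
  have ident: "cos (w z) * (z * deriv f z) = f z * (1 + w z)" if z: "z \<in> ball 0 1" for z
  proof (cases "z = 0")
    case True then show ?thesis using f0 w0 by simp
  next
    case False
    have "w z \<in> ball 0 1" using wb z by (meson image_subset_iff)
    then have "norm (w z) < 1" by simp
    also have "1 < pi / 2" using pi_gt3 by simp
    finally have "cos (w z) \<noteq> 0" using cos_eq_zero_imp_norm_ge[of "w z"] by auto
    moreover have "f z \<noteq> 0" using fnz z False by auto
    moreover have "z * deriv f z / f z = (1 + w z) / cos (w z)"
      using wq[OF z] False by (simp add: starlike_quot_def)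
    ultimately show ?thesis by (simp add: field_simps)
  qed
  define A where "A = fps_expansion f 0"
  define W where "W = fps_expansion w 0"
  have fA: "f has_fps_expansion A" unfolding A_def using fh by (intro has_fps_expansion_fps_expansion) auto
  have wW: "w has_fps_expansion W" unfolding W_def using wh by (intro has_fps_expansion_fps_expansion) auto
  have W0: "W $ 0 = 0" using w0 by (simp add: W_def fps_expansion_def)
  have A0: "A $ 0 = 0" using f0 by (simp add: A_def fps_expansion_def)
  have A1: "A $ 1 = 1" using f1 by (simp add: A_def fps_expansion_def)
  have g1: "(\<lambda>z. cos (w z) * (z * deriv f z)) has_fps_expansion (fps_cos 1 oo W) * (fps_X * fps_deriv A)"
  proof -
    have "(cos \<circ> w) has_fps_expansion (fps_cos 1 oo W)"
      by (rule has_fps_expansion_compose[OF has_fps_expansion_cos' wW W0])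
    then show ?thesis unfolding o_def
      by (intro has_fps_expansion_mult has_fps_expansion_deriv fA has_fps_expansion_fps_X)
  qed
  have g2: "(\<lambda>z. f z * (1 + w z)) has_fps_expansion A * (1 + W)"
    by (intro has_fps_expansion_mult has_fps_expansion_add fA wW has_fps_expansion_1)
  have ev: "eventually (\<lambda>z. cos (w z) * (z * deriv f z) = f z * (1 + w z)) (nhds 0)"
  proof -
    have "eventually (\<lambda>z. z \<in> ball 0 1) (nhds (0::complex))"
      by (intro eventually_nhds_in_open) auto
    then show ?thesis by (rule eventually_mono) (use ident in auto)
  qed
  have g1': "(\<lambda>z. f z * (1 + w z)) has_fps_expansion (fps_cos 1 oo W) * (fps_X * fps_deriv A)"
    using has_fps_expansion_cong[OF ev refl] g1 by simp
  have E: "(fps_cos 1 oo W) * (fps_X * fps_deriv A) = A * (1 + W)"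
    by (rule fps_unique[OF g1' g2])
  have cA: "coeff f n = A $ n" for n by (simp add: A_def coeff_def fps_expansion_def)
  have cW: "coeff w n = W $ n" for n by (simp add: W_def coeff_def fps_expansion_def)
  show "coeff f 2 = coeff w 1" "coeff f 3 = coeff w 2/2 + 3/4*(coeff w 1)^2"
    "coeff f 4 = coeff w 3/3 + 5/6*coeff w 1*coeff w 2 + 7/12*(coeff w 1)^3"
    using fps_alg[OF E A0 A1 W0] unfolding cA cW by simp_all
qed

lemma circle_coeff:
  fixes F :: "complex \<Rightarrow> complex"
  assumes hol: "F holomorphic_on ball 0 1" and r: "0 < r" "r < 1"
  shows "((\<lambda>t. F (circlepath 0 r t) / (circlepath 0 r t)^k) has_integral ((deriv^^k) F 0 / fact k)) {0..1}"
proof -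
  let ?g = "circlepath 0 r"
  have sub: "cball 0 r \<subseteq> ball (0::complex) 1" using r by auto
  have "((\<lambda>u. F u / (u-0)^(Suc k)) has_contour_integral ((2*pi*\<i>)/fact k * (deriv^^k) F 0)) ?g"
    apply (rule Cauchy_has_contour_integral_higher_derivative_circlepath)
    using hol sub r by (auto intro: holomorphic_on_imp_continuous_on holomorphic_on_subset continuous_on_subset)
  then have i1: "((\<lambda>t. F (?g t) / (?g t)^(Suc k) * vector_derivative ?g (at t within {0..1}))
       has_integral ((2*pi*\<i>)/fact k * (deriv^^k) F 0)) {0..1}"
    by (simp add: has_contour_integral_def)
  have eq: "F (?g t) / (?g t)^(Suc k) * vector_derivative ?g (at t within {0..1}) = (2*pi*\<i>) * (F (?g t) / (?g t)^k)"
    if "t \<in> {0..1}" for t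
  proof -
    have nz: "?g t \<noteq> 0" using r by (simp add: circlepath)
    have vd: "vector_derivative ?g (at t within {0..1}) = 2*pi*\<i> * ?g t"
      using that vector_derivative_circlepath01[of t 0 r] by (simp add: circlepath[of 0 r])
    show ?thesis unfolding vd using nz by (simp add: field_simps)
  qed
  have "((\<lambda>t. (2*pi*\<i>) * (F (?g t) / (?g t)^k)) has_integral ((2*pi*\<i>)/fact k * (deriv^^k) F 0)) {0..1}"
    using i1 by (subst has_integral_cong[OF eq[symmetric]]) auto
  then have "((\<lambda>t. F (?g t) / (?g t)^k) has_integral ((2*pi*\<i>)/fact k * (deriv^^k) F 0) / (2*pi*\<i>)) {0..1}"
    by (subst (asm) has_integral_mult_right_iff) auto
  then show ?thesis by simp
qed

lemma poly3_coeffs: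
  fixes a1 a2 a3 :: complex
  defines "P \<equiv> (\<lambda>z. a1 * z + a2 * z^2 + a3 * z^3)"
  shows "(deriv^^1) P 0 / fact 1 = a1" "(deriv^^2) P 0 / fact 2 = a2" "(deriv^^3) P 0 / fact 3 = a3"
proof -
  have "P has_fps_expansion (fps_const a1 * fps_X + fps_const a2 * fps_X^2 + fps_const a3 * fps_X^3)"
    unfolding P_def
    by (intro has_fps_expansion_add has_fps_expansion_mult has_fps_expansion_const
        has_fps_expansion_fps_X has_fps_expansion_fps_X_power)
  note e = fps_nth_fps_expansion[OF this]
  show "(deriv^^1) P 0 / fact 1 = a1" using e[of 1, symmetric]
    by (simp add: fps_X_power_mult_nth fps_X_power_mult_right_nth del: funpow.simps)
  show "(deriv^^2) P 0 / fact 2 = a2" using e[of 2, symmetric]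
    by (simp add: fps_X_power_mult_nth fps_X_power_mult_right_nth del: funpow.simps)
  show "(deriv^^3) P 0 / fact 3 = a3" using e[of 3, symmetric]
    by (simp add: fps_X_power_mult_nth fps_X_power_mult_right_nth del: funpow.simps)
qed

lemma two_re_le:
  fixes u p :: complex
  shows "2 * Re (u * cnj p) \<le> (norm u)^2 + (norm p)^2"
proof -
  have "0 \<le> (Re u - Re p)^2 + (Im u - Im p)^2" by simp
  moreover have "(norm u)^2 = (Re u)^2 + (Im u)^2" "(norm p)^2 = (Re p)^2 + (Im p)^2"
    by (simp_all add: cmod_power2)
  ultimately show ?thesis by (simp add: power2_eq_square algebra_simps)
qed

lemma schwarz_r:
  fixes w :: "complex \<Rightarrow> complex"
  assumes wh: "w holomorphic_on ball 0 1" and wb: "w ` ball 0 1 \<subseteq> ball 0 1"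
    and r: "0 < r" "r < 1"
  shows "(norm (coeff w 1))^2 * r^2 + (norm (coeff w 2))^2 * r^4 + (norm (coeff w 3))^2 * r^6 \<le> 1"
proof -
  define a1 where "a1 = coeff w 1"
  define a2 where "a2 = coeff w 2"
  define a3 where "a3 = coeff w 3"
  define P where "P = (\<lambda>z. a1 * z + a2 * z^2 + a3 * z^3)"
  let ?g = "circlepath 0 r"
  define Q where "Q = (\<lambda>t. cnj a1 * r^2 / ?g t + cnj a2 * r^4 / (?g t)^2 + cnj a3 * r^6 / (?g t)^3)"
  have gn: "norm (?g t) = r" for t using r by (simp add: circlepath norm_mult)
  have gnz: "?g t \<noteq> 0" for t using gn[of t] r by auto
  have gc: "cnj (?g t) = r^2 / ?g t" for t
  proof -
    have "?g t * cnj (?g t) = of_real ((norm (?g t))^2)" by (rule complex_norm_square[symmetric])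
    then show ?thesis using gnz[of t] gn[of t] by (simp add: field_simps)
  qed
  have Qc: "Q t = cnj (P (?g t))" for t
    unfolding Q_def P_def by (simp add: gc power_divide field_simps)
  have Ph: "P holomorphic_on ball 0 1" unfolding P_def by (intro holomorphic_intros)
  have IF: "((\<lambda>t. F (?g t) * Q t) has_integral
      (cnj a1 * r^2 * ((deriv^^1) F 0 / fact 1) + cnj a2 * r^4 * ((deriv^^2) F 0 / fact 2)
       + cnj a3 * r^6 * ((deriv^^3) F 0 / fact 3))) {0..1}"
    if Fh: "F holomorphic_on ball 0 1" for F
  proof -
    have "((\<lambda>t. cnj a1 * r^2 * (F (?g t) / (?g t)^1) + cnj a2 * r^4 * (F (?g t) / (?g t)^2)
       + cnj a3 * r^6 * (F (?g t) / (?g t)^3)) has_integral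
      (cnj a1 * r^2 * ((deriv^^1) F 0 / fact 1) + cnj a2 * r^4 * ((deriv^^2) F 0 / fact 2)
       + cnj a3 * r^6 * ((deriv^^3) F 0 / fact 3))) {0..1}"
      by (intro has_integral_add has_integral_mult_right circle_coeff[OF Fh r])
    moreover have "cnj a1 * r^2 * (F (?g t) / (?g t)^1) + cnj a2 * r^4 * (F (?g t) / (?g t)^2)
       + cnj a3 * r^6 * (F (?g t) / (?g t)^3) = F (?g t) * Q t" for t
      unfolding Q_def by (simp add: field_simps)
    ultimately show ?thesis by simp
  qed
  define S where "S = cnj a1 * r^2 * a1 + cnj a2 * r^4 * a2 + cnj a3 * r^6 * a3"
  have Sr: "S = of_real ((norm a1)^2 * r^2 + (norm a2)^2 * r^4 + (norm a3)^2 * r^6)"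
  proof -
    have ca: "cnj a * a = of_real ((norm a)^2)" for a :: complex
      using complex_norm_square[of a] by (simp add: mult.commute del: of_real_power)
    have "S = (cnj a1 * a1) * of_real (r^2) + (cnj a2 * a2) * of_real (r^4) + (cnj a3 * a3) * of_real (r^6)"
      unfolding S_def by (simp add: algebra_simps)
    then show ?thesis unfolding ca by simp
  qed
  have Iw: "((\<lambda>t. w (?g t) * Q t) has_integral S) {0..1}"
    using IF[OF wh] unfolding S_def a1_def a2_def a3_def coeff_def by simp
  have IP: "((\<lambda>t. P (?g t) * Q t) has_integral S) {0..1}"
    using IF[OF Ph] unfolding S_def P_def poly3_coeffs .
  have Iw': "((\<lambda>t. 2 * Re (w (?g t) * Q t)) has_integral (2 * Re S)) {0..1}"
  proof -
    have "((\<lambda>t. Re (w (?g t) * Q t)) has_integral Re S) {0..1}"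
      using has_integral_linear[OF Iw bounded_linear_Re] by (simp add: o_def del: times_complex.sel)
    from has_integral_mult_right[OF this, of 2] show ?thesis by simp
  qed
  have IP': "((\<lambda>t. 1 + Re (P (?g t) * Q t)) has_integral (1 + Re S)) {0..1}"
    using has_integral_add[OF has_integral_const_real[of 1 0 1] has_integral_linear[OF IP bounded_linear_Re]]
    by (simp add: o_def del: times_complex.sel)
  have le: "2 * Re (w (?g t) * Q t) \<le> 1 + Re (P (?g t) * Q t)" for t
  proof -
    have "?g t \<in> ball 0 1" using gn[of t] r by simp
    then have "w (?g t) \<in> ball 0 1" using wb by (meson image_subset_iff)
    then have u1: "norm (w (?g t)) \<le> 1" by simp
    then have "(norm (w (?g t)))^2 \<le> 1" by (simp add: power_le_one)
    moreover have "Re (P (?g t) * Q t) = (norm (P (?g t)))^2"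
      unfolding Qc by (simp only: cmod_power2 complex_mult_cnj Re_complex_of_real)
    moreover have "2 * Re (w (?g t) * Q t) \<le> (norm (w (?g t)))^2 + (norm (P (?g t)))^2"
      unfolding Qc by (rule two_re_le)
    ultimately show ?thesis by linarith
  qed
  have "2 * Re S \<le> 1 + Re S"
    by (rule has_integral_le[OF Iw' IP']) (use le in auto)
  then show ?thesis unfolding Sr a1_def a2_def a3_def by (simp add: mult.commute add.commute add.left_commute)
qed

lemma schwarz_coeffs:
  fixes w :: "complex \<Rightarrow> complex"
  assumes wh: "w holomorphic_on ball 0 1" and wb: "w ` ball 0 1 \<subseteq> ball 0 1"
  shows "(norm (coeff w 1))^2 + (norm (coeff w 2))^2 + (norm (coeff w 3))^2 \<le> 1"
proof -
  define x where "x = (norm (coeff w 1))^2"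
  define y where "y = (norm (coeff w 2))^2"
  define z where "z = (norm (coeff w 3))^2"
  let ?g = "\<lambda>r::real. x * r^2 + y * r^4 + z * r^6"
  have "(?g \<longlongrightarrow> ?g 1) (at_left 1)"
    by (intro tendsto_intros)
  moreover have "eventually (\<lambda>r. ?g r \<le> 1) (at_left (1::real))"
  proof -
    have "eventually (\<lambda>r. r \<in> {0<..<1}) (at_left (1::real))"
      by (rule eventually_at_left_real) simp
    then show ?thesis
      by (rule eventually_mono) (use schwarz_r[OF wh wb] in \<open>auto simp: x_def y_def z_def\<close>)
  qed
  ultimately have "?g 1 \<le> 1"
    by (intro tendsto_upperbound) auto
  then show ?thesis by (simp add: x_def y_def z_def)
qed

lemma real_ineq:
  fixes x y z :: real
  assumes "0 \<le> x" "0 \<le> y" "0 \<le> z" "x^2 + y^2 + z^2 \<le> 1"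
  shows "x*z/3 + x^2*y/12 + x^4/48 + y^2/4 \<le> 1/4"
proof -
  have "x^2 \<le> 1" using assms(4) zero_le_power2[of y] zero_le_power2[of z] by linarith
  then have "x^2 \<le> 1^2" by simp
  then have x1: "x \<le> 1" by (rule power2_le_imp_le) simp
  have "y^2 \<le> 1" using assms(4) zero_le_power2[of x] zero_le_power2[of z] by linarith
  then have "y^2 \<le> 1^2" by simp
  then have y1: "y \<le> 1" by (rule power2_le_imp_le) simp
  have a: "x^2 * y \<le> x^2" using y1 by (simp add: mult_left_le)
  have b: "x^4 \<le> x^2" using x1 assms(1)
    by (intro power_decreasing) auto
  have c: "0 \<le> 7*(x - 8/7*z)^2 + 20/7*z^2" by simp
  have d: "7*(x - 8/7*z)^2 + 20/7*z^2 = 7*x^2 - 16*x*z + 12*z^2" by (simp add: power2_eq_square algebra_simps)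
  show ?thesis using a b c d assms(4) by linarith
qed

lemma hankel_bound:
  fixes c1 c2 c3 :: complex
  assumes "(norm c1)^2 + (norm c2)^2 + (norm c3)^2 \<le> 1"
  shows "norm (c1 * (c3/3 + 5/6*c1*c2 + 7/12*c1^3) - (c2/2 + 3/4*c1^2)^2) \<le> 1/4"
proof -
  have "c1 * (c3/3 + 5/6*c1*c2 + 7/12*c1^3) - (c2/2 + 3/4*c1^2)^2
        = c1*c3/3 + c1^2*c2/12 + c1^4/48 - c2^2/4"
    by (simp add: field_simps power2_eq_square power4_eq_xxxx power3_eq_cube) 
  also have "norm \<dots> \<le> norm (c1*c3/3) + norm (c1^2*c2/12) + norm (c1^4/48) + norm (c2^2/4)"
  proof -
    have t: "norm (a + b - c) \<le> norm a + norm b + norm c" for a b c :: complex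
      using norm_triangle_ineq4[of "a+b" c] norm_triangle_ineq[of a b] by linarith
    show ?thesis using t[of "c1*c3/3 + c1^2*c2/12" "c1^4/48" "c2^2/4"]
      norm_triangle_ineq[of "c1*c3/3" "c1^2*c2/12"] by linarith
  qed
  also have "\<dots> = norm c1 * norm c3/3 + (norm c1)^2 * norm c2/12 + (norm c1)^4/48 + (norm c2)^2/4"
    by (simp add: norm_mult norm_divide norm_power)
  also have "\<dots> \<le> 1/4"
    by (rule real_ineq) (use assms in auto)
  finally show ?thesis .
qed

lemma cos_nz: "norm (z::complex) < 1 \<Longrightarrow> cos z \<noteq> 0"
  using cos_eq_zero_imp_norm_ge[of z] pi_gt3 by auto

lemma upper:
  assumes "Snc f"
  shows "norm (coeff f 2 * coeff f 4 - (coeff f 3)\<^sup>2) \<le> 1/4"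
proof -
  from assms have fh: "f holomorphic_on ball 0 1" and f0: "f 0 = 0" and f1: "deriv f 0 = 1"
    and fnz: "\<And>z. z \<in> ball 0 1 - {0} \<Longrightarrow> f z \<noteq> 0"
    and sub: "subordinate (starlike_quot f) (\<lambda>z. (1 + z) / cos z)"
    by (auto simp: Snc_def classA_def)
  from sub obtain w where wh: "w holomorphic_on ball 0 1" and w0: "w 0 = 0"
    and wb: "w ` ball 0 1 \<subseteq> ball 0 1"
    and wq: "\<And>z. z \<in> ball 0 1 \<Longrightarrow> starlike_quot f z = (1 + w z) / cos (w z)"
    unfolding subordinate_def by blast
  note c = coeff_rel_w[OF fh f0 f1 fnz wh w0 wb wq]
  show ?thesis using hankel_bound[OF schwarz_coeffs[OF wh wb]] by (simp only: c)
qed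

lemma sq_coeffs: "coeff (\<lambda>z::complex. z^2) 1 = 0" "coeff (\<lambda>z::complex. z^2) 2 = 1"
  "coeff (\<lambda>z::complex. z^2) 3 = 0"
proof -
  have "(\<lambda>z::complex. z^2) has_fps_expansion fps_X^2" by (rule has_fps_expansion_fps_X_power)
  note e = fps_nth_fps_expansion[OF this]
  show "coeff (\<lambda>z::complex. z^2) 1 = 0" "coeff (\<lambda>z::complex. z^2) 2 = 1"
    "coeff (\<lambda>z::complex. z^2) 3 = 0"
    unfolding coeff_def using e[of 1, symmetric] e[of 2, symmetric] e[of 3, symmetric]
    by (simp_all add: fps_X_power_nth del: funpow.simps)
qed

lemma extremal:
  obtains F where "Snc F" "norm (coeff F 2 * coeff F 4 - (coeff F 3)\<^sup>2) = 1/4"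
proof -
  define \<phi> where "\<phi> = (\<lambda>z::complex. (1 + z) / cos z)"
  have \<phi>h: "\<phi> holomorphic_on ball 0 1"
    unfolding \<phi>_def by (intro holomorphic_intros) (auto intro!: cos_nz)
  have \<phi>0: "\<phi> 0 = 1" by (simp add: \<phi>_def)
  define q where "q = (\<lambda>z. if z = 0 then deriv \<phi> 0 else (\<phi> z - \<phi> 0) / (z - 0))"
  have qh: "q holomorphic_on ball 0 1"
    unfolding q_def by (rule pole_lemma[OF \<phi>h]) simp
  obtain G0 where G0: "\<And>x. x \<in> ball 0 1 \<Longrightarrow> (G0 has_field_derivative q x) (at x within ball 0 1)"
    using holomorphic_convex_primitive'[OF convex_ball open_ball qh] by metis
  define G where "G = (\<lambda>z. G0 z - G0 0)"
  have Gd: "(G has_field_derivative q x) (at x)" if "x \<in> ball 0 1" for x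
  proof -
    have G0x: "(G0 has_field_derivative q x) (at x)"
      using G0[OF that] unfolding at_within_open[OF that open_ball] .
    have "((\<lambda>z. G0 z - G0 0) has_field_derivative q x - 0) (at x)"
      by (rule DERIV_diff[OF G0x DERIV_const])
    then show ?thesis unfolding G_def by simp
  qed
  have G00: "G 0 = 0" by (simp add: G_def)
  define F where "F = (\<lambda>z. z * exp (G (z^2) / 2))"
  have sqb: "z^2 \<in> ball 0 1" if "z \<in> ball (0::complex) 1" for z
  proof -
    have "norm z ^ 2 < 1 ^ 2" using that by (intro power_strict_mono) auto
    then show ?thesis by (simp add: norm_power)
  qed
  have Fd: "(F has_field_derivative exp (G (z^2) / 2) * (1 + z^2 * q (z^2))) (at z)"
    if z: "z \<in> ball 0 1" for z
  proof -
    have "((\<lambda>z. G (z^2)) has_field_derivative q (z^2) * (2 * z)) (at z)"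
    proof -
      have d2: "((\<lambda>z. z^2) has_field_derivative 2 * z) (at z)"
        by (auto intro!: derivative_eq_intros)
      show ?thesis using DERIV_chain2[where f=G and g="\<lambda>z. z^2" and x=z, OF Gd[OF sqb[OF z]] d2]
        by (simp add: mult.commute)
    qed
    then show ?thesis unfolding F_def
      by (auto intro!: derivative_eq_intros simp: field_simps power2_eq_square)
  qed
  have Fh: "F holomorphic_on ball 0 1"
    unfolding holomorphic_on_open[OF open_ball] using Fd by blast
  have F0: "F 0 = 0" by (simp add: F_def)
  have F1: "deriv F 0 = 1" using DERIV_imp_deriv[OF Fd[of 0]] G00 by simp
  have Fnz: "F z \<noteq> 0" if "z \<in> ball 0 1 - {0}" for z using that by (simp add: F_def)
  have wq: "starlike_quot F z = (1 + z^2) / cos (z^2)" if z: "z \<in> ball 0 1" for z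
  proof (cases "z = 0")
    case True then show ?thesis by (simp add: starlike_quot_def)
  next
    case False
    have "z^2 \<noteq> 0" using False by simp
    have "starlike_quot F z = z * (exp (G (z^2) / 2) * (1 + z^2 * q (z^2))) / (z * exp (G (z^2) / 2))"
      using False DERIV_imp_deriv[OF Fd[OF z]] by (simp add: starlike_quot_def F_def)
    also have "\<dots> = 1 + z^2 * q (z^2)" using False by (simp add: field_simps)
    also have "\<dots> = \<phi> (z^2)" using \<open>z^2 \<noteq> 0\<close> \<phi>0 by (simp add: q_def)
    finally show ?thesis by (simp add: \<phi>_def)
  qed
  have wh: "(\<lambda>z::complex. z^2) holomorphic_on ball 0 1" by (intro holomorphic_intros)
  have wb: "(\<lambda>z::complex. z^2) ` ball 0 1 \<subseteq> ball 0 1" using sqb by auto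
  have SF: "Snc F"
    unfolding Snc_def classA_def subordinate_def
    using Fh F0 F1 Fnz wh wb wq by (intro conjI exI[of _ "\<lambda>z. z^2"]) auto
  have w0: "(\<lambda>z::complex. z^2) 0 = 0" by simp
  note c = coeff_rel_w[OF Fh F0 F1 Fnz wh w0 wb wq]
  have "norm (coeff F 2 * coeff F 4 - (coeff F 3)\<^sup>2) = 1/4"
  proof -
    have "coeff F 2 * coeff F 4 - (coeff F 3)\<^sup>2 = -1/4"
      by (simp only: c sq_coeffs) (simp add: power2_eq_square)
    then show ?thesis by simp
  qed
  with SF show ?thesis by (rule that)
qed

theorem mainTheorem5:
  shows "(\<forall>f. Snc f \<longrightarrow> norm (coeff f 2 * coeff f 4 - (coeff f 3)\<^sup>2) \<le> 1/4) \<and>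
         (\<exists>f. Snc f \<and> norm (coeff f 2 * coeff f 4 - (coeff f 3)\<^sup>2) = 1/4)"
  using upper extremal by blast

end
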